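(* Let $(Q,P)$ be a weakly quasi-lattice ordered group and let $\Lambda$ be a finitely aligned $P$-graph. Then the collection of sets $Z(\mu\setminus K)=\{x\in\mathcal{F}(\Lambda):\mu\in x,\ x\cap K=\emptyset\}$, where $\mu\in\Lambda$ and $K\subseteq\mu\Lambda$ is finite, is a basis for the topology of $\mathcal{F}(\Lambda)$.
   Context: $(Q,P)$ weakly quasi-lattice ordered: $Q$ a discrete group, $P\subseteq Q$ a subsemigroup containing the identity $e$ with $P\cap P^{-1}=\{e\}$, and, with $p\le r$ meaning $pq=r$ for some $q\in P$, any two elements of $P$ with a common upper bound have a least common upper bound. A $P$-graph is a countable small category $\Lambda$ (range/source $r,s$) with a functor $d:\Lambda\to P$ with unique factorisation (if $d(\lambda)=pq$ there are unique $\mu,\nu$ with $\lambda=\mu\nu$, $d(\mu)=p$, $d(\nu)=q$). Write $\lambda\Lambda=\{\lambda\mu: s(\lambda)=r(\mu)\}$, $\mu\preceq\lambda$ iff $\lambda\in\mu\Lambda$. $\Lambda$ is finitely aligned if for all $\mu,\nu\in\Lambda$ there is a finite (possibly empty) $J\subseteq\Lambda$ with $\mu\Lambda\cap\nu\Lambda=\bigcup_{\kappa\in J}\kappa\Lambda$. A filter is a nonempty hereditary and directed subset of $\Lambda$ (w.r.t. $\preceq$); $\mathcal{F}(\Lambda)$ is the set of filters, with the subspace topology from $\mathcal{P}(\Lambda)\cong\{0,1\}^\Lambda$ carrying the product topology (basis $\{x: K_1\subseteq x\subseteq\Lambda\setminus K_2\}$, $K_1,K_2$ finite). *)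

theory Defs
  imports "HOL-Analysis.Analysis" "HOL-Algebra.Group"
begin

definition pleq :: "('q, 'b) monoid_scheme \<Rightarrow> 'q set \<Rightarrow> 'q \<Rightarrow> 'q \<Rightarrow> bool" where
  "pleq G P p r \<longleftrightarrow> (\<exists>q\<in>P. p \<otimes>\<^bsub>G\<^esub> q = r)"

definition wqlo :: "('q, 'b) monoid_scheme \<Rightarrow> 'q set \<Rightarrow> bool" where
  "wqlo G P \<longleftrightarrow> group G \<and> P \<subseteq> carrier G \<and> \<one>\<^bsub>G\<^esub> \<in> P
     \<and> (\<forall>p\<in>P. \<forall>q\<in>P. p \<otimes>\<^bsub>G\<^esub> q \<in> P)
     \<and> P \<inter> (\<lambda>p. inv\<^bsub>G\<^esub> p) ` P = {\<one>\<^bsub>G\<^esub>}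
     \<and> (\<forall>p\<in>P. \<forall>r\<in>P. (\<exists>u\<in>P. pleq G P p u \<and> pleq G P r u) \<longrightarrow>
          (\<exists>l\<in>P. pleq G P p l \<and> pleq G P r l \<and>
              (\<forall>u\<in>P. pleq G P p u \<and> pleq G P r u \<longrightarrow> pleq G P l u)))"

text \<open>A small category with object set obj, morphism set mor, range rng, source src,
  identities idt and composition cmp (cmp m n defined when src m = rng n),
  together with a degree map deg into the group.\<close>

record ('o, 'a, 'q) pgraph =
  obj :: "'o set"
  mor :: "'a set"
  rng :: "'a \<Rightarrow> 'o"
  src :: "'a \<Rightarrow> 'o"
  idt :: "'o \<Rightarrow> 'a"
  cmp :: "'a \<Rightarrow> 'a \<Rightarrow> 'a"
  deg :: "'a \<Rightarrow> 'q"

definition small_category :: "('o, 'a, 'q, 'c) pgraph_scheme \<Rightarrow> bool" where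
  "small_category L \<longleftrightarrow>
     (\<forall>m\<in>mor L. rng L m \<in> obj L \<and> src L m \<in> obj L)
   \<and> (\<forall>v\<in>obj L. idt L v \<in> mor L \<and> rng L (idt L v) = v \<and> src L (idt L v) = v)
   \<and> (\<forall>m\<in>mor L. \<forall>n\<in>mor L. src L m = rng L n \<longrightarrow>
        cmp L m n \<in> mor L \<and> rng L (cmp L m n) = rng L m \<and> src L (cmp L m n) = src L n)
   \<and> (\<forall>m\<in>mor L. \<forall>n\<in>mor L. \<forall>k\<in>mor L. src L m = rng L n \<and> src L n = rng L k \<longrightarrow>
        cmp L (cmp L m n) k = cmp L m (cmp L n k))
   \<and> (\<forall>m\<in>mor L. cmp L (idt L (rng L m)) m = m \<and> cmp L m (idt L (src L m)) = m)"

definition P_graph :: "('q, 'b) monoid_scheme \<Rightarrow> 'q set \<Rightarrow> ('o, 'a, 'q, 'c) pgraph_scheme \<Rightarrow> bool" where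
  "P_graph G P L \<longleftrightarrow> small_category L \<and> countable (obj L) \<and> countable (mor L)
   \<and> (\<forall>m\<in>mor L. deg L m \<in> P)
   \<and> (\<forall>v\<in>obj L. deg L (idt L v) = \<one>\<^bsub>G\<^esub>)
   \<and> (\<forall>m\<in>mor L. \<forall>n\<in>mor L. src L m = rng L n \<longrightarrow>
        deg L (cmp L m n) = deg L m \<otimes>\<^bsub>G\<^esub> deg L n)
   \<and> (\<forall>l\<in>mor L. \<forall>p\<in>P. \<forall>q\<in>P. deg L l = p \<otimes>\<^bsub>G\<^esub> q \<longrightarrow>
        (\<exists>!(m, n). m \<in> mor L \<and> n \<in> mor L \<and> src L m = rng L n \<and>
              l = cmp L m n \<and> deg L m = p \<and> deg L n = q))"

text \<open>\<open>ext L m\<close> is the set m\<Lambda>.\<close>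
definition ext :: "('o, 'a, 'q, 'c) pgraph_scheme \<Rightarrow> 'a \<Rightarrow> 'a set" where
  "ext L m = {cmp L m n | n. n \<in> mor L \<and> src L m = rng L n}"

definition prec :: "('o, 'a, 'q, 'c) pgraph_scheme \<Rightarrow> 'a \<Rightarrow> 'a \<Rightarrow> bool" where
  "prec L m l \<longleftrightarrow> l \<in> ext L m"

definition finitely_aligned :: "('o, 'a, 'q, 'c) pgraph_scheme \<Rightarrow> bool" where
  "finitely_aligned L \<longleftrightarrow> (\<forall>m\<in>mor L. \<forall>n\<in>mor L. \<exists>J. finite J \<and> J \<subseteq> mor L \<and>
      ext L m \<inter> ext L n = (\<Union>k\<in>J. ext L k))"

definition pg_filter :: "('o, 'a, 'q, 'c) pgraph_scheme \<Rightarrow> 'a set \<Rightarrow> bool" where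
  "pg_filter L x \<longleftrightarrow> x \<subseteq> mor L \<and> x \<noteq> {}
     \<and> (\<forall>l\<in>x. \<forall>m\<in>mor L. prec L m l \<longrightarrow> m \<in> x)
     \<and> (\<forall>m\<in>x. \<forall>n\<in>x. \<exists>l\<in>x. prec L m l \<and> prec L n l)"

definition filters :: "('o, 'a, 'q, 'c) pgraph_scheme \<Rightarrow> 'a set set" where
  "filters L = {x. pg_filter L x}"

text \<open>Product topology on the power set of A, via P(A) \<cong> {0,1}^A.\<close>
definition powtop :: "'a set \<Rightarrow> 'a set topology" where
  "powtop A = pullback_topology (Pow A) (\<lambda>x. restrict (\<lambda>l. l \<in> x) A)
      (product_topology (\<lambda>_. discrete_topology (UNIV :: bool set)) A)"

definition filtertop :: "('o, 'a, 'q, 'c) pgraph_scheme \<Rightarrow> 'a set topology" where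
  "filtertop L = subtopology (powtop (mor L)) (filters L)"

definition Zset :: "('o, 'a, 'q, 'c) pgraph_scheme \<Rightarrow> 'a \<Rightarrow> 'a set \<Rightarrow> 'a set set" where
  "Zset L m K = {x \<in> filters L. m \<in> x \<and> x \<inter> K = {}}"

end

theory Submission
  imports Defs
begin

lemma self_ext:
  assumes "small_category L" "k \<in> mor L"
  shows "k \<in> ext L k"
proof -
  have "src L k \<in> obj L" using assms unfolding small_category_def by blast
  then have "idt L (src L k) \<in> mor L" "rng L (idt L (src L k)) = src L k"
    using assms unfolding small_category_def by blast+
  moreover have "cmp L k (idt L (src L k)) = k"
    using assms unfolding small_category_def by blast
  ultimately show ?thesis unfolding ext_def by force
qed

lemma ext_sub:
  assumes "small_category L" "m \<in> mor L"
  shows "ext L m \<subseteq> mor L"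
  using assms unfolding small_category_def ext_def by blast

lemma up_lemma:
  assumes "pg_filter L x" "finite K1" "K1 \<subseteq> x"
  shows "\<exists>m\<in>x. \<forall>y. pg_filter L y \<and> m \<in> y \<longrightarrow> K1 \<subseteq> y"
  using assms(2,3)
proof (induction K1 rule: finite_induct)
  case empty
  then show ?case using assms(1) unfolding pg_filter_def by blast
next
  case (insert k F)
  then obtain m' where m': "m' \<in> x" "\<forall>y. pg_filter L y \<and> m' \<in> y \<longrightarrow> F \<subseteq> y" by auto
  have kx: "k \<in> x" using insert by auto
  obtain l where l: "l \<in> x" "prec L m' l" "prec L k l"
    using assms(1) m'(1) kx unfolding pg_filter_def by blast
  have mm: "m' \<in> mor L" "k \<in> mor L" using assms(1) m'(1) kx unfolding pg_filter_def by blast+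
  show ?case
  proof (intro bexI[OF _ l(1)] allI impI)
    fix y assume y: "pg_filter L y \<and> l \<in> y"
    then have "m' \<in> y" "k \<in> y" using l mm unfolding pg_filter_def by blast+
    then show "insert k F \<subseteq> y" using m' y by auto
  qed
qed

lemma down_lemma:
  assumes fa: "finitely_aligned L" and sc: "small_category L" and m: "m \<in> mor L"
    and "finite K2" "K2 \<subseteq> mor L"
  shows "\<exists>K. finite K \<and> K \<subseteq> ext L m \<and> (\<forall>n\<in>K2. \<forall>l. l \<in> ext L m \<inter> ext L n \<longrightarrow> (\<exists>k\<in>K. prec L k l))
     \<and> (\<forall>k\<in>K. \<exists>n\<in>K2. prec L n k)"
proof -
  have "\<forall>n\<in>K2. \<exists>J. finite J \<and> J \<subseteq> mor L \<and> ext L m \<inter> ext L n = (\<Union>k\<in>J. ext L k)"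
    using fa m assms(5) unfolding finitely_aligned_def by blast
  then obtain J where J: "\<And>n. n \<in> K2 \<Longrightarrow> finite (J n) \<and> J n \<subseteq> mor L \<and>
      ext L m \<inter> ext L n = (\<Union>k\<in>J n. ext L k)" by metis
  define K where "K = (\<Union>n\<in>K2. J n)"
  have fin: "finite K" unfolding K_def using J assms(4) by auto
  have kin: "k \<in> ext L m \<and> prec L n k" if "n \<in> K2" "k \<in> J n" for n k
  proof -
    have "k \<in> ext L k" using self_ext[OF sc] J that by blast
    then have "k \<in> ext L m \<inter> ext L n" using J[OF that(1)] that(2) by blast
    then show ?thesis unfolding prec_def by blast
  qed
  show ?thesis
  proof (intro exI conjI)
    show "finite K" by (rule fin)
    show "K \<subseteq> ext L m" unfolding K_def using kin by blast
    show "\<forall>n\<in>K2. \<forall>l. l \<in> ext L m \<inter> ext L n \<longrightarrow> (\<exists>k\<in>K. prec L k l)"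
      unfolding K_def prec_def using J by blast
    show "\<forall>k\<in>K. \<exists>n\<in>K2. prec L n k" unfolding K_def using kin by blast
  qed
qed

lemma comb_lemma:
  assumes fa: "finitely_aligned L" and sc: "small_category L"
    and x: "pg_filter L x" and "finite K1" "K1 \<subseteq> x" "finite K2" "x \<inter> K2 = {}"
  shows "\<exists>m K. m \<in> mor L \<and> finite K \<and> K \<subseteq> ext L m \<and> x \<in> Zset L m K \<and>
     Zset L m K \<subseteq> {y \<in> filters L. K1 \<subseteq> y \<and> y \<inter> K2 = {}}"
proof -
  obtain m where m: "m \<in> x" "\<forall>y. pg_filter L y \<and> m \<in> y \<longrightarrow> K1 \<subseteq> y"
    using up_lemma[OF x assms(4,5)] by blast
  have mm: "m \<in> mor L" using x m unfolding pg_filter_def by blast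
  obtain K where K: "finite K" "K \<subseteq> ext L m"
     "\<forall>n\<in>K2 \<inter> mor L. \<forall>l. l \<in> ext L m \<inter> ext L n \<longrightarrow> (\<exists>k\<in>K. prec L k l)"
     "\<forall>k\<in>K. \<exists>n\<in>K2 \<inter> mor L. prec L n k"
    using down_lemma[OF fa sc mm, of "K2 \<inter> mor L"] assms(6) by blast
  have Kmor: "K \<subseteq> mor L" using K(2) ext_sub[OF sc mm] by blast
  show ?thesis
  proof (intro exI conjI)
    show "m \<in> mor L" "finite K" "K \<subseteq> ext L m" by (fact mm K(1) K(2))+
    show "x \<in> Zset L m K"
    proof -
      have "x \<inter> K = {}"
      proof (rule ccontr)
        assume "x \<inter> K \<noteq> {}"
        then obtain k where k: "k \<in> x" "k \<in> K" by blast
        then obtain n where "n \<in> K2 \<inter> mor L" "prec L n k" using K(4) by blast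
        then have "n \<in> x" using x k unfolding pg_filter_def by blast
        then show False using assms(7) \<open>n \<in> K2 \<inter> mor L\<close> by blast
      qed
      then show ?thesis unfolding Zset_def filters_def using x m by blast
    qed
    show "Zset L m K \<subseteq> {y \<in> filters L. K1 \<subseteq> y \<and> y \<inter> K2 = {}}"
    proof
      fix y assume "y \<in> Zset L m K"
      then have y: "pg_filter L y" "m \<in> y" "y \<inter> K = {}" unfolding Zset_def filters_def by auto
      have "K1 \<subseteq> y" using m y by blast
      moreover have "y \<inter> K2 = {}"
      proof (rule ccontr)
        assume "y \<inter> K2 \<noteq> {}"
        then obtain n where n: "n \<in> y" "n \<in> K2" by blast
        then have nm: "n \<in> mor L" using y unfolding pg_filter_def by blast
        obtain l where l: "l \<in> y" "prec L m l" "prec L n l"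
          using y n unfolding pg_filter_def by blast
        then have "l \<in> ext L m \<inter> ext L n" unfolding prec_def by blast
        then obtain k where k: "k \<in> K" "prec L k l" using K(3) n nm by blast
        then have "k \<in> y" using y(1) l(1) Kmor unfolding pg_filter_def by blast
        then show False using y(3) k by blast
      qed
      ultimately show "y \<in> {y \<in> filters L. K1 \<subseteq> y \<and> y \<inter> K2 = {}}"
        using y unfolding filters_def by auto
    qed
  qed
qed


lemma open_Zset:
  assumes "m \<in> mor L" "finite K" "K \<subseteq> mor L"
  shows "openin (filtertop L) (Zset L m K)"
proof -
  define A where "A = mor L"
  define chi where "chi = (\<lambda>x::'a set. restrict (\<lambda>l. l \<in> x) A)"
  define W where "W = {g \<in> PiE A (\<lambda>_. UNIV). g m = True \<and> (\<forall>k\<in>K. g k = False)}"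
  have W: "openin (product_topology (\<lambda>_. discrete_topology (UNIV :: bool set)) A) W"
    unfolding openin_product_topology_alt
  proof
    fix g assume g: "g \<in> W"
    define U where "U = (\<lambda>i. if i = m then {True} else if i \<in> K then {False} else (UNIV::bool set))"
    show "\<exists>U. finite {i \<in> A. U i \<noteq> topspace (discrete_topology UNIV)} \<and>
             (\<forall>i\<in>A. openin (discrete_topology UNIV) (U i)) \<and> g \<in> Pi\<^sub>E A U \<and> Pi\<^sub>E A U \<subseteq> W"
    proof (intro exI conjI)
      show "finite {i \<in> A. U i \<noteq> topspace (discrete_topology UNIV)}"
        by (rule finite_subset[of _ "insert m K"]) (auto simp: U_def assms(2))
      show "\<forall>i\<in>A. openin (discrete_topology UNIV) (U i)" by simp
      show "g \<in> Pi\<^sub>E A U" using g unfolding W_def U_def PiE_def Pi_def by auto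
      show "Pi\<^sub>E A U \<subseteq> W" using assms g unfolding W_def U_def PiE_def Pi_def A_def
        by (auto split: if_splits)
    qed
  qed
  have V: "openin (powtop A) (chi -` W \<inter> Pow A)"
    unfolding powtop_def openin_pullback_topology chi_def using W by blast
  have "Zset L m K = (chi -` W \<inter> Pow A) \<inter> filters L"
    using assms unfolding Zset_def filters_def pg_filter_def W_def chi_def A_def by auto
  then show ?thesis unfolding filtertop_def openin_subtopology A_def using V A_def by blast
qed

lemma open_nbhd:
  assumes "openin (filtertop L) U" "x \<in> U"
  shows "\<exists>K1 K2. finite K1 \<and> finite K2 \<and> K1 \<subseteq> x \<and> x \<inter> K2 = {} \<and> x \<in> filters L \<and>
     {y \<in> filters L. K1 \<subseteq> y \<and> y \<inter> K2 = {}} \<subseteq> U"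
proof -
  define A where "A = mor L"
  define chi where "chi = (\<lambda>x::'a set. restrict (\<lambda>l. l \<in> x) A)"
  obtain V where V: "openin (powtop A) V" "U = V \<inter> filters L"
    using assms(1) unfolding filtertop_def openin_subtopology A_def by blast
  obtain W where W: "openin (product_topology (\<lambda>_. discrete_topology (UNIV :: bool set)) A) W"
     "V = chi -` W \<inter> Pow A"
    using V(1) unfolding powtop_def openin_pullback_topology chi_def by blast
  have xV: "x \<in> V" "x \<in> filters L" using assms(2) V(2) by blast+
  then have xW: "chi x \<in> W" "x \<subseteq> A" "x \<in> filters L" using W(2) by blast+
  have "\<exists>Ui. finite {i \<in> A. Ui i \<noteq> topspace (discrete_topology (UNIV::bool set))} \<and>
     (\<forall>i\<in>A. openin (discrete_topology UNIV) (Ui i)) \<and> chi x \<in> PiE A Ui \<and> PiE A Ui \<subseteq> W"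
    using W(1) xW(1) unfolding openin_product_topology_alt by blast
  then obtain Ui where Ui0: "finite {i \<in> A. Ui i \<noteq> topspace (discrete_topology (UNIV::bool set))}"
     "chi x \<in> PiE A Ui" "PiE A Ui \<subseteq> W" by blast
  have Ui: "finite {i \<in> A. Ui i \<noteq> (UNIV::bool set)}" "chi x \<in> PiE A Ui" "PiE A Ui \<subseteq> W"
    using Ui0 by simp_all
  define F where "F = {i \<in> A. Ui i \<noteq> (UNIV::bool set)}"
  show ?thesis
  proof (intro exI conjI)
    show "finite (F \<inter> x)" "finite (F - x)" using Ui(1) F_def by auto
    show "F \<inter> x \<subseteq> x" "x \<inter> (F - x) = {}" "x \<in> filters L" using xW by auto
    show "{y \<in> filters L. F \<inter> x \<subseteq> y \<and> y \<inter> (F - x) = {}} \<subseteq> U"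
    proof
      fix y assume y: "y \<in> {y \<in> filters L. F \<inter> x \<subseteq> y \<and> y \<inter> (F - x) = {}}"
      have yA: "y \<subseteq> A" using y unfolding filters_def pg_filter_def A_def by auto
      have "chi y \<in> PiE A Ui"
      proof -
        have "chi y i \<in> Ui i" if "i \<in> A" for i
        proof (cases "i \<in> F")
          case True
          then have "(i \<in> y) = (i \<in> x)" using y by blast
          then have "chi y i = chi x i" using that unfolding chi_def by simp
          moreover have "chi x i \<in> Ui i" using Ui(2) that unfolding PiE_iff by blast
          ultimately show ?thesis by simp
        next
          case False
          then show ?thesis using that unfolding F_def by auto
        qed
        moreover have "chi y \<in> extensional A" unfolding chi_def by simp
        ultimately show ?thesis unfolding PiE_iff by blast
      qed
      then have "chi y \<in> W" using Ui(3) by (rule subsetD[rotated])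
      then have "y \<in> V" unfolding W(2) using yA by simp
      then show "y \<in> U" unfolding V(2) using y by simp
    qed
  qed
qed

theorem lemma6p2:
  fixes G :: "('q, 'b) monoid_scheme" and P :: "'q set"
    and L :: "('o, 'a, 'q, 'c) pgraph_scheme"
  assumes "wqlo G P" and "P_graph G P L" and "finitely_aligned L"
  shows "openin (filtertop L) =
    arbitrary union_of (\<lambda>U. \<exists>m K. m \<in> mor L \<and> finite K \<and> K \<subseteq> ext L m \<and> U = Zset L m K)"
proof -
  have sc: "small_category L" using assms(2) unfolding P_graph_def by blast
  show ?thesis
    unfolding openin_topology_base_unique
  proof (intro conjI allI impI)
    fix V assume "\<exists>m K. m \<in> mor L \<and> finite K \<and> K \<subseteq> ext L m \<and> V = Zset L m K"
    then obtain m K where "m \<in> mor L" "finite K" "K \<subseteq> ext L m" "V = Zset L m K" by blast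
    moreover then have "K \<subseteq> mor L" using ext_sub[OF sc, of m] by (meson order_trans)
    ultimately show "openin (filtertop L) V" using open_Zset[of m L K] by simp
  next
    fix U x assume ux: "openin (filtertop L) U \<and> x \<in> U"
    then obtain K1 K2 where K: "finite K1" "finite K2" "K1 \<subseteq> x" "x \<inter> K2 = {}" "x \<in> filters L"
       "{y \<in> filters L. K1 \<subseteq> y \<and> y \<inter> K2 = {}} \<subseteq> U"
      using open_nbhd[of L U x] ux by blast
    have "pg_filter L x" using K(5) unfolding filters_def by simp
    from comb_lemma[OF assms(3) sc this K(1) K(3) K(2) K(4)] obtain m K' where
      mK: "m \<in> mor L" "finite K'" "K' \<subseteq> ext L m" "x \<in> Zset L m K'"
        "Zset L m K' \<subseteq> {y \<in> filters L. K1 \<subseteq> y \<and> y \<inter> K2 = {}}" by blast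
    have "Zset L m K' \<subseteq> U" using mK(5) K(6) by (rule order_trans)
    then show "\<exists>V. (\<exists>m K. m \<in> mor L \<and> finite K \<and> K \<subseteq> ext L m \<and> V = Zset L m K) \<and> x \<in> V \<and> V \<subseteq> U"
      using mK by blast
  qed
qed

end
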